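(* Let $x_1,x_2,x_3,x_4\in\mathbb{Z}^3$ be the vertices of a Fano tetrahedron, and let $\lambda_1,\ldots,\lambda_4$ be non-negative integers with $\gcd(\lambda_1,\ldots,\lambda_4)=1$ such that, with $h=\lambda_1+\cdots+\lambda_4$, the numbers $\lambda_i/h$ are the barycentric coordinates of the origin with respect to $x_1,\ldots,x_4$ (i.e. $\sum_i\lambda_ix_i=0$). Then (i) $\sum_{i=1}^4\left\{\frac{\kappa\lambda_i}{h}\right\}=2$ for all integers $\kappa\in\{2,\ldots,h-2\}$, and (ii) $\gcd(\lambda_i,\lambda_j)=1$ for all $i\neq j$.
   Context: A tetrahedron is called Fano if its vertices lie in $\mathbb{Z}^3$ and the only lattice point it contains other than its vertices is the origin, which lies strictly in its interior. $\{q\}=q-\lfloor q\rfloor$ denotes the fractional part of $q\in\mathbb{Q}$. *)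

theory Defs
  imports "HOL-Analysis.Analysis"
begin

definition lattice_point :: "real^3 \<Rightarrow> bool" where
  "lattice_point v \<longleftrightarrow> (\<forall>i. v $ i \<in> \<int>)"

definition fano_tetrahedron :: "(real^3) set \<Rightarrow> bool" where
  "fano_tetrahedron V \<longleftrightarrow>
     card V = 4 \<and> \<not> affine_dependent V \<and> (\<forall>v\<in>V. lattice_point v) \<and>
     {v \<in> convex hull V. lattice_point v} = insert 0 V \<and>
     0 \<in> interior (convex hull V)"

end

theory Submission
  imports Defs
begin

lemma lattice_add: "lattice_point a \<Longrightarrow> lattice_point b \<Longrightarrow> lattice_point (a + b)"
  unfolding lattice_point_def by auto

lemma lattice_scale: "lattice_point a \<Longrightarrow> lattice_point (of_int n *\<^sub>R a)"
  unfolding lattice_point_def by auto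

lemma lattice_sum:
  assumes "\<forall>i\<in>A. lattice_point (y i)"
  shows "lattice_point (\<Sum>i\<in>A. of_int (n i) *\<^sub>R y i)"
  using assms unfolding lattice_point_def sum_component
  by (auto intro!: Ints_sum)

locale fano_setup =
  fixes x :: "nat \<Rightarrow> real^3" and lam :: "nat \<Rightarrow> nat" and h :: nat
  assumes inj: "inj_on x {1..4}"
    and fano: "fano_tetrahedron (x ` {1..4})"
    and gcd1: "Gcd (lam ` {1..4}) = 1"
    and hdef: "h = (\<Sum>i\<in>{1..4}. lam i)"
    and rel: "(\<Sum>i\<in>{1..4}. real (lam i) *\<^sub>R x i) = 0"
begin

lemma hpos: "h > 0"
proof (rule ccontr)
  assume "\<not> h > 0"
  then have "\<forall>i\<in>{1..4}. lam i = 0" using hdef by simp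
  then have "lam ` {1..4} = {0}" by force
  then show False using gcd1 by simp
qed

lemma hr: "real h = (\<Sum>i\<in>{1..4}. real (lam i))"
  using hdef by simp

lemma indep: "\<not> affine_dependent (x ` {1..4})"
  using fano unfolding fano_tetrahedron_def by blast

lemma inv_x: "i \<in> {1..4} \<Longrightarrow> inv_into {1..4} x (x i) = i"
  using inv_into_f_f[OF inj] by blast

lemma kernel:
  assumes "(\<Sum>i\<in>{1..4}. c i *\<^sub>R x i) = 0"
  shows "\<exists>t. \<forall>i\<in>{1..4}. c i = t * real (lam i)"
proof -
  define t where "t = (\<Sum>i\<in>{1..4}. c i) / real h"
  define d where "d i = c i - t * real (lam i)" for i
  have s0: "(\<Sum>i\<in>{1..4}. d i) = 0"
  proof -
    have "(\<Sum>i\<in>{1..4}. t * real (lam i)) = t * real h"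
      by (simp add: sum_distrib_left[symmetric] hr)
    also have "\<dots> = (\<Sum>i\<in>{1..4}. c i)" using hpos by (simp add: t_def)
    finally show ?thesis unfolding d_def sum_subtractf by simp
  qed
  have s1: "(\<Sum>i\<in>{1..4}. d i *\<^sub>R x i) = 0"
  proof -
    have "(\<Sum>i\<in>{1..4}. (t * real (lam i)) *\<^sub>R x i) = t *\<^sub>R (\<Sum>i\<in>{1..4}. real (lam i) *\<^sub>R x i)"
      by (simp add: scaleR_sum_right)
    then show ?thesis unfolding d_def scaleR_diff_left sum_subtractf using assms rel by simp
  qed
  have "\<forall>i\<in>{1..4}. d i = 0"
  proof (rule ccontr)
    assume "\<not> (\<forall>i\<in>{1..4}. d i = 0)"
    then obtain i where i: "i \<in> {1..4}" "d i \<noteq> 0" by blast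
    define U where "U v = d (inv_into {1..4} x v)" for v
    have "sum U (x ` {1..4}) = sum (U \<circ> x) {1..4}" by (rule sum.reindex[OF inj])
    also have "\<dots> = sum d {1..4}" by (rule sum.cong) (simp, metis U_def comp_apply inv_x)
    finally have a: "sum U (x ` {1..4}) = 0" using s0 by simp
    have "(\<Sum>v\<in>x ` {1..4}. U v *\<^sub>R v) = (\<Sum>j\<in>{1..4}. U (x j) *\<^sub>R x j)"
      by (rule sum.reindex_cong[OF inj]) auto
    also have "\<dots> = (\<Sum>j\<in>{1..4}. d j *\<^sub>R x j)" by (rule sum.cong) (simp, metis U_def comp_apply inv_x)
    finally have b: "(\<Sum>v\<in>x ` {1..4}. U v *\<^sub>R v) = 0" using s1 by simp
    have c: "\<exists>v\<in>x ` {1..4}. U v \<noteq> 0" using i by (metis U_def image_eqI inv_x)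
    have "affine_dependent (x ` {1..4})"
      using a b c by (subst affine_dependent_explicit_finite) auto
    then show False using indep by blast
  qed
  then show ?thesis unfolding d_def by auto
qed

lemma conv:
  assumes "\<forall>i\<in>{1..4}. 0 \<le> c i" "(\<Sum>i\<in>{1..4}. c i) \<le> 1"
  shows "(\<Sum>i\<in>{1..4}. c i *\<^sub>R x i) \<in> convex hull (x ` {1..4})"
proof -
  define r where "r = 1 - (\<Sum>i\<in>{1..4}. c i)"
  define a where "a i = c i + (r / real h) * real (lam i)" for i
  have "(\<Sum>i\<in>{1..4}. a i) = (\<Sum>i\<in>{1..4}. c i) + (r / real h) * real h"
    unfolding a_def sum.distrib by (simp only: sum_distrib_left[symmetric] hr[symmetric])
  also have "\<dots> = 1" using hpos by (simp add: r_def)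
  finally have s: "(\<Sum>i\<in>{1..4}. a i) = 1" .
  have "(\<Sum>i\<in>{1..4}. ((r / real h) * real (lam i)) *\<^sub>R x i) = (r / real h) *\<^sub>R (\<Sum>i\<in>{1..4}. real (lam i) *\<^sub>R x i)"
    by (simp add: scaleR_sum_right)
  then have e: "(\<Sum>i\<in>{1..4}. a i *\<^sub>R x i) = (\<Sum>i\<in>{1..4}. c i *\<^sub>R x i)"
    unfolding a_def scaleR_add_left sum.distrib using rel by simp
  have rr: "r \<ge> 0" using assms(2) by (simp add: r_def)
  have "(\<Sum>i\<in>{1..4}. a i *\<^sub>R x i) \<in> convex hull (x ` {1..4})"
    apply (rule convex_sum)
    using s assms(1) rr hpos by (auto simp: a_def hull_inc)
  then show ?thesis using e by simp
qed

lemma delta_sum: "k \<in> {1..4} \<Longrightarrow> (\<Sum>i\<in>{1..4}. (if i = k then 1 else 0) *\<^sub>R x i) = x k"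
proof -
  assume k: "k \<in> {1..4}"
  have "(\<Sum>i\<in>{1..4}. (if i = k then 1 else 0) *\<^sub>R x i) = (\<Sum>i\<in>{1..4}. if i = k then x i else 0)"
    by (rule sum.cong) auto
  also have "\<dots> = x k" using k by (simp only: sum.delta finite_atLeastAtMost if_True)
  finally show ?thesis .
qed

lemma Q:
  assumes "\<forall>i\<in>{1..4}. 0 \<le> c i" "(\<Sum>i\<in>{1..4}. c i) \<le> 1"
    and "lattice_point (\<Sum>i\<in>{1..4}. c i *\<^sub>R x i)"
  shows "(\<exists>t. \<forall>i\<in>{1..4}. c i = t * real (lam i)) \<or>
         (\<exists>k\<in>{1..4}. \<exists>t. \<forall>i\<in>{1..4}. c i = (if i = k then 1 else 0) + t * real (lam i))"
proof -
  let ?q = "(\<Sum>i\<in>{1..4}. c i *\<^sub>R x i)"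
  have "?q \<in> {v \<in> convex hull (x ` {1..4}). lattice_point v}"
    using conv[OF assms(1,2)] assms(3) by blast
  then have "?q \<in> insert 0 (x ` {1..4})" using fano unfolding fano_tetrahedron_def by blast
  then consider "?q = 0" | k where "k \<in> {1..4}" "?q = x k" by blast
  then show ?thesis
  proof cases
    case 1
    then show ?thesis using kernel by blast
  next
    case 2
    define c' where "c' i = c i - (if i = k then 1 else 0)" for i
    have "(\<Sum>i\<in>{1..4}. c' i *\<^sub>R x i) = ?q - x k"
      unfolding c'_def scaleR_diff_left sum_subtractf using delta_sum[OF 2(1)] by simp
    then have "(\<Sum>i\<in>{1..4}. c' i *\<^sub>R x i) = 0" using 2 by simp
    from kernel[OF this] obtain t where "\<forall>i\<in>{1..4}. c' i = t * real (lam i)" by blast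
    then have "\<forall>i\<in>{1..4}. c i = (if i = k then 1 else 0) + t * real (lam i)"
      unfolding c'_def by auto
    then show ?thesis using 2(1) by blast
  qed
qed

lemma lam_pos:
  assumes k: "k \<in> {1..4}" shows "lam k > 0"
proof (rule ccontr)
  assume "\<not> lam k > 0"
  then have l0: "lam k = 0" by simp
  have "0 \<in> interior (convex hull (x ` {1..4}))" using fano unfolding fano_tetrahedron_def by blast
  then obtain e where e: "e > 0" "ball 0 e \<subseteq> convex hull (x ` {1..4})"
    unfolding mem_interior by blast
  define \<delta> where "\<delta> = e / (2 * (norm (x k) + 1))"
  have np: "norm (x k) + 1 > 0" using norm_ge_zero[of "x k"] by linarith
  have dpos: "\<delta> > 0" unfolding \<delta>_def using e(1) np by (intro divide_pos_pos mult_pos_pos) auto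
  have "norm (- \<delta> *\<^sub>R x k) = \<delta> * norm (x k)" using dpos by simp
  also have "\<dots> < e"
  proof -
    have "\<delta> * norm (x k) \<le> \<delta> * (norm (x k) + 1)" using dpos by simp
    also have "\<dots> = e / 2" unfolding \<delta>_def using np by (simp add: field_simps)
    finally show ?thesis using e by simp
  qed
  finally have "- \<delta> *\<^sub>R x k \<in> convex hull (x ` {1..4})" using e(2) by auto
  then obtain u where u: "\<forall>v\<in>x ` {1..4}. 0 \<le> u v" "(\<Sum>v\<in>x ` {1..4}. u v *\<^sub>R v) = - \<delta> *\<^sub>R x k"
    unfolding convex_hull_finite[OF finite_imageI[OF finite_atLeastAtMost]] by blast
  define c where "c i = u (x i) + \<delta> * (if i = k then 1 else 0)" for i
  have ri: "(\<Sum>v\<in>x ` {1..4}. u v *\<^sub>R v) = (\<Sum>i\<in>{1..4}. u (x i) *\<^sub>R x i)"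
    by (rule sum.reindex_cong[OF inj]) auto
  have "(\<Sum>i\<in>{1..4}. c i *\<^sub>R x i) = - \<delta> *\<^sub>R x k + \<delta> *\<^sub>R x k"
  proof -
    have "(\<Sum>i\<in>{1..4}. (\<delta> * (if i = k then 1 else 0)) *\<^sub>R x i) = \<delta> *\<^sub>R (\<Sum>i\<in>{1..4}. (if i = k then 1 else 0) *\<^sub>R x i)"
      by (simp only: scaleR_sum_right scaleR_scaleR)
    then show ?thesis unfolding c_def scaleR_add_left sum.distrib using u(2) delta_sum[OF k] ri
      by simp
  qed
  then have "(\<Sum>i\<in>{1..4}. c i *\<^sub>R x i) = 0" by simp
  from kernel[OF this] obtain t where "\<forall>i\<in>{1..4}. c i = t * real (lam i)" by blast
  then have "c k = 0" using k l0 by simp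
  moreover have "c k > 0" using u(1) k dpos by (simp add: c_def add_nonneg_pos)
  ultimately show False by simp
qed

lemma vert_lattice: "\<forall>i\<in>{1..4}. lattice_point (x i)"
  using fano unfolding fano_tetrahedron_def by blast

lemma gcd_dvd:
  fixes m n :: int
  assumes "\<forall>i\<in>{1..4}. m dvd n * int (lam i)"
  shows "m dvd n"
proof -
  have "m dvd Gcd ((*) n ` int ` lam ` {1..4})"
    by (rule Gcd_greatest) (use assms in auto)
  also have "\<dots> = normalize n" unfolding Gcd_mult Gcd_int_eq gcd1 by simp
  finally show ?thesis by simp
qed

definition cf :: "int \<Rightarrow> nat \<Rightarrow> real" where
  "cf \<kappa> i = frac (real_of_int \<kappa> * real (lam i) / real h)"

lemma cf_lattice: "lattice_point (\<Sum>i\<in>{1..4}. cf \<kappa> i *\<^sub>R x i)"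
proof -
  let ?y = "\<lambda>i. real_of_int \<kappa> * real (lam i) / real h"
  have a: "(\<Sum>i\<in>{1..4}. ?y i *\<^sub>R x i) = (real_of_int \<kappa> / real h) *\<^sub>R (\<Sum>i\<in>{1..4}. real (lam i) *\<^sub>R x i)"
    by (simp add: scaleR_sum_right)
  have "(\<Sum>i\<in>{1..4}. cf \<kappa> i *\<^sub>R x i) = (\<Sum>i\<in>{1..4}. ?y i *\<^sub>R x i) - (\<Sum>i\<in>{1..4}. of_int \<lfloor>?y i\<rfloor> *\<^sub>R x i)"
    unfolding cf_def frac_def scaleR_diff_left sum_subtractf by simp
  also have "\<dots> = (\<Sum>i\<in>{1..4}. of_int (- \<lfloor>?y i\<rfloor>) *\<^sub>R x i)"
    using a rel by (simp add: sum_negf[symmetric])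
  finally have eq: "(\<Sum>i\<in>{1..4}. cf \<kappa> i *\<^sub>R x i) = (\<Sum>i\<in>{1..4}. of_int (- \<lfloor>?y i\<rfloor>) *\<^sub>R x i)" .
  show ?thesis unfolding eq by (rule lattice_sum[OF vert_lattice])
qed

lemma cf_int: "(\<Sum>i\<in>{1..4}. cf \<kappa> i) = of_int (\<kappa> - (\<Sum>i\<in>{1..4}. \<lfloor>real_of_int \<kappa> * real (lam i) / real h\<rfloor>))"
proof -
  have "(\<Sum>i\<in>{1..4}. real_of_int \<kappa> * real (lam i) / real h) = real_of_int \<kappa> * real h / real h"
    by (simp add: sum_divide_distrib[symmetric] sum_distrib_left[symmetric] hr)
  also have "\<dots> = real_of_int \<kappa>" using hpos by simp
  finally show ?thesis unfolding cf_def frac_def sum_subtractf by simp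
qed

lemma cf_ge: "0 \<le> cf \<kappa> i" and cf_lt: "cf \<kappa> i < 1"
  unfolding cf_def by (auto simp: frac_lt_1)

lemma one:
  assumes "\<not> int h dvd \<kappa> - 1"
  shows "(\<Sum>i\<in>{1..4}. cf \<kappa> i) \<noteq> 1"
proof
  assume S: "(\<Sum>i\<in>{1..4}. cf \<kappa> i) = 1"
  have "(\<exists>t. \<forall>i\<in>{1..4}. cf \<kappa> i = t * real (lam i)) \<or>
         (\<exists>k\<in>{1..4}. \<exists>t. \<forall>i\<in>{1..4}. cf \<kappa> i = (if i = k then 1 else 0) + t * real (lam i))"
    by (rule Q) (use S cf_ge cf_lattice in auto)
  then show False
  proof
    assume "\<exists>k\<in>{1..4}. \<exists>t. \<forall>i\<in>{1..4}. cf \<kappa> i = (if i = k then 1 else 0) + t * real (lam i)"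
    then obtain k t where k: "k \<in> {1..4}" and t: "\<forall>i\<in>{1..4}. cf \<kappa> i = (if i = k then 1 else 0) + t * real (lam i)"
      by blast
    define j where "j = (if k = 1 then 2 else (1::nat))"
    have j: "j \<in> {1..4}" "j \<noteq> k" by (auto simp: j_def)
    have "1 + t * real (lam k) < 1" using t k cf_lt[of \<kappa> k] by simp
    then have "t * real (lam k) < 0" by simp
    then have "t < 0" using lam_pos[OF k] by (simp add: mult_less_0_iff)
    then have "t * real (lam j) < 0" using lam_pos[OF j(1)] by (simp add: mult_less_0_iff)
    moreover have "cf \<kappa> j = t * real (lam j)" using t j by simp
    ultimately show False using cf_ge[of \<kappa> j] by simp
  next
    assume "\<exists>t. \<forall>i\<in>{1..4}. cf \<kappa> i = t * real (lam i)"
    then obtain t where t: "\<forall>i\<in>{1..4}. cf \<kappa> i = t * real (lam i)" by blast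
    have "1 = (\<Sum>i\<in>{1..4}. t * real (lam i))" using S t by simp
    also have "\<dots> = t * real h" by (simp add: sum_distrib_left[symmetric] hr)
    finally have th: "t = 1 / real h" using hpos by (simp add: field_simps)
    have "\<forall>i\<in>{1..4}. int h dvd (\<kappa> - 1) * int (lam i)"
    proof
      fix i :: nat assume i: "i \<in> {1..4}"
      let ?y = "real_of_int \<kappa> * real (lam i) / real h"
      have "frac ?y = real (lam i) / real h" using t i th unfolding cf_def by simp
      then have "?y - of_int \<lfloor>?y\<rfloor> = real (lam i) / real h" unfolding frac_def .
      then have "real_of_int ((\<kappa> - 1) * int (lam i)) = real h * of_int \<lfloor>?y\<rfloor>"
        using hpos by (simp add: field_simps)
      then have "real_of_int ((\<kappa> - 1) * int (lam i)) = real_of_int (int h * \<lfloor>?y\<rfloor>)" by simp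
      then have "(\<kappa> - 1) * int (lam i) = int h * \<lfloor>?y\<rfloor>" by (simp only: of_int_eq_iff)
      then show "int h dvd (\<kappa> - 1) * int (lam i)" by simp
    qed
    then have "int h dvd \<kappa> - 1" by (rule gcd_dvd)
    then show False using assms by simp
  qed
qed

lemma zero:
  assumes "\<not> int h dvd \<kappa>"
  shows "(\<Sum>i\<in>{1..4}. cf \<kappa> i) \<noteq> 0"
proof
  assume "(\<Sum>i\<in>{1..4}. cf \<kappa> i) = 0"
  then have z: "\<forall>i\<in>{1..4}. cf \<kappa> i = 0"
    using sum_nonneg_eq_0_iff[of "{1..4}" "cf \<kappa>"] cf_ge by auto
  have "\<forall>i\<in>{1..4}. int h dvd \<kappa> * int (lam i)"
  proof
    fix i :: nat assume i: "i \<in> {1..4}"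
    let ?y = "real_of_int \<kappa> * real (lam i) / real h"
    have "?y \<in> \<int>" using z i unfolding cf_def by (simp add: frac_eq_0_iff)
    then obtain n where n: "?y = of_int n" by (auto elim: Ints_cases)
    then have "real_of_int (\<kappa> * int (lam i)) = real_of_int (int h * n)"
      using hpos by (simp add: field_simps)
    then have "\<kappa> * int (lam i) = int h * n" by (simp only: of_int_eq_iff)
    then show "int h dvd \<kappa> * int (lam i)" by simp
  qed
  then have "int h dvd \<kappa>" by (rule gcd_dvd)
  then show False using assms by simp
qed

lemma three:
  assumes "(\<Sum>i\<in>{1..4}. cf \<kappa> i) = 3"
  shows "(\<Sum>i\<in>{1..4}. cf (- \<kappa>) i) = 1"
proof -
  have nz: "\<forall>i\<in>{1..4}. cf \<kappa> i \<noteq> 0"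
  proof (rule ccontr)
    assume "\<not> (\<forall>i\<in>{1..4}. cf \<kappa> i \<noteq> 0)"
    then obtain j where j: "j \<in> {1..4}" "cf \<kappa> j = 0" by blast
    have "(\<Sum>i\<in>{1..4}. 1 - cf \<kappa> i) = 4 - 3" using assms by (simp add: sum_subtractf)
    also have "(\<Sum>i\<in>{1..4}. 1 - cf \<kappa> i) = (1 - cf \<kappa> j) + (\<Sum>i\<in>{1..4} - {j}. 1 - cf \<kappa> i)"
      using j(1) by (simp add: sum.remove)
    finally have "(\<Sum>i\<in>{1..4} - {j}. 1 - cf \<kappa> i) = 0" using j by simp
    then have "\<forall>i\<in>{1..4} - {j}. 1 - cf \<kappa> i = 0"
      using sum_nonneg_eq_0_iff[of "{1..4} - {j}" "\<lambda>i. 1 - cf \<kappa> i"] cf_lt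
      by (simp add: less_imp_le)
    moreover have "(if j = 1 then 2 else (1::nat)) \<in> {1..4} - {j}" by auto
    ultimately have "1 - cf \<kappa> (if j = 1 then 2 else (1::nat)) = 0" by blast
    then show False using cf_lt[of \<kappa> "if j = 1 then 2 else (1::nat)"] by simp
  qed
  have "\<forall>i\<in>{1..4}. cf (- \<kappa>) i = 1 - cf \<kappa> i"
  proof
    fix i :: nat assume i: "i \<in> {1..4}"
    let ?y = "real_of_int \<kappa> * real (lam i) / real h"
    have "?y \<notin> \<int>" using nz i unfolding cf_def by (simp add: frac_eq_0_iff)
    then have "frac (- ?y) = 1 - frac ?y" by (simp add: frac_neg)
    then show "cf (- \<kappa>) i = 1 - cf \<kappa> i" unfolding cf_def by simp
  qed
  then have "(\<Sum>i\<in>{1..4}. cf (- \<kappa>) i) = (\<Sum>i\<in>{1..4}. 1 - cf \<kappa> i)" by simp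
  also have "\<dots> = 1" using assms by (simp add: sum_subtractf)
  finally show ?thesis .
qed

lemma part1:
  assumes "2 \<le> \<kappa>" "\<kappa> \<le> int h - 2"
  shows "(\<Sum>i\<in>{1..4}. cf \<kappa> i) = 2"
proof -
  have nd: "\<not> int h dvd m" if "0 < m" "m < int h" for m
    using zdvd_imp_le[OF _ that(1), of "int h"] that(2) by auto
  obtain m where m: "(\<Sum>i\<in>{1..4}. cf \<kappa> i) = of_int m" using cf_int by blast
  have "(\<Sum>i\<in>{1..4}. cf \<kappa> i) \<ge> 0" using cf_ge by (simp add: sum_nonneg)
  moreover have "(\<Sum>i\<in>{1..4}. cf \<kappa> i) < (\<Sum>i::nat\<in>{1..4}. (1::real))"
    by (rule sum_strict_mono) (use cf_lt in auto)
  ultimately have "0 \<le> m" "m < 4" using m by auto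
  moreover have "m \<noteq> 0" using zero[of \<kappa>] nd[of \<kappa>] assms m by auto
  moreover have "m \<noteq> 1" using one[of \<kappa>] nd[of "\<kappa> - 1"] assms m by auto
  moreover have "m \<noteq> 3"
  proof
    assume "m = 3"
    then have "(\<Sum>i\<in>{1..4}. cf (- \<kappa>) i) = 1" using three m by simp
    moreover have "\<not> int h dvd (- \<kappa> - 1)"
    proof
      assume "int h dvd (- \<kappa> - 1)"
      moreover have "- \<kappa> - 1 = - (\<kappa> + 1)" by simp
      ultimately have "int h dvd \<kappa> + 1" by (simp only: dvd_minus_iff)
      then show False using nd[of "\<kappa> + 1"] assms by simp
    qed
    ultimately show False using one[of "- \<kappa>"] by simp
  qed
  ultimately have "m = 2" by auto
  then show ?thesis using m by simp
qed

lemma core2: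
  assumes set4: "{1..4} = {i, j, k, l}"
    and dist: "i \<noteq> j" "i \<noteq> k" "i \<noteq> l" "j \<noteq> k" "j \<noteq> l" "k \<noteq> l"
    and d: "d \<ge> 2" "d dvd lam i" "d dvd lam j" "\<not> d dvd lam k"
  shows False
proof -
  have decomp: "(\<Sum>m\<in>{1..4}. f m) = f i + f j + f k + f l" for f :: "nat \<Rightarrow> 'b::comm_monoid_add"
    unfolding set4 using dist by (simp add: add.assoc)
  have mem: "i \<in> {1..4}" "j \<in> {1..4}" "k \<in> {1..4}" "l \<in> {1..4}" using set4 by auto
  have rel4: "real (lam i) *\<^sub>R x i + real (lam j) *\<^sub>R x j + real (lam k) *\<^sub>R x k + real (lam l) *\<^sub>R x l = 0"
    using rel unfolding decomp .
  obtain ni where ni: "lam i = d * ni" using d(2) by (rule dvdE)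
  obtain nj where nj: "lam j = d * nj" using d(3) by (rule dvdE)
  note nij = ni nj
  have dpos: "real d > 0" using d by simp
  define a0 where "a0 = frac (real (lam k) / real d)"
  define b0 where "b0 = frac (real (lam l) / real d)"
  have nint: "real (lam k) / real d \<notin> \<int>"
  proof
    assume "real (lam k) / real d \<in> \<int>"
    then obtain n where n: "real (lam k) / real d = of_int n" by (auto elim: Ints_cases)
    then have "real_of_int (int (lam k)) = real_of_int (int d * n)" using dpos by (simp add: field_simps)
    then have "int (lam k) = int d * n" by (simp only: of_int_eq_iff)
    then have "int d dvd int (lam k)" by simp
    then show False using d(4) by simp
  qed
  have "a0 \<noteq> 0" using nint unfolding a0_def frac_eq_0_iff .
  moreover have "a0 \<ge> 0" unfolding a0_def by simp
  ultimately have a0: "0 < a0" "a0 < 1" unfolding a0_def by (auto simp: frac_lt_1)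
  have b0: "0 \<le> b0" "b0 < 1" unfolding b0_def by (auto simp: frac_lt_1)
  obtain \<sigma> :: int where sg: "\<sigma> = 1 \<or> \<sigma> = -1"
    and ab: "0 < frac (real_of_int \<sigma> * real (lam k) / real d)" "frac (real_of_int \<sigma> * real (lam k) / real d) < 1"
       "frac (real_of_int \<sigma> * real (lam k) / real d) + frac (real_of_int \<sigma> * real (lam l) / real d) \<le> 1"
  proof (cases "a0 + b0 \<le> 1")
    case True
    then show ?thesis using that[of 1] a0 by (simp add: a0_def b0_def)
  next
    case False
    then have "b0 > 0" using a0 by simp
    then have "real (lam l) / real d \<notin> \<int>" unfolding b0_def using frac_eq_0_iff by fastforce
    then have "frac (- (real (lam l) / real d)) = 1 - b0" unfolding b0_def by (simp add: frac_neg)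
    moreover have "frac (- (real (lam k) / real d)) = 1 - a0" using nint unfolding a0_def by (simp add: frac_neg)
    ultimately show ?thesis using that[of "-1"] a0 False by simp
  qed
  define a where "a = frac (real_of_int \<sigma> * real (lam k) / real d)"
  define b where "b = frac (real_of_int \<sigma> * real (lam l) / real d)"
  have bge: "0 \<le> b" unfolding b_def by simp
  define fa where "fa = \<lfloor>real_of_int \<sigma> * real (lam k) / real d\<rfloor>"
  define fb where "fb = \<lfloor>real_of_int \<sigma> * real (lam l) / real d\<rfloor>"
  have aeq: "a = real_of_int \<sigma> * real (lam k) / real d - of_int fa" unfolding a_def fa_def frac_def ..
  have beq: "b = real_of_int \<sigma> * real (lam l) / real d - of_int fb" unfolding b_def fb_def frac_def ..
  have lkl: "real (lam k) *\<^sub>R x k + real (lam l) *\<^sub>R x l = - (real (lam i) *\<^sub>R x i + real (lam j) *\<^sub>R x j)"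
    using rel4 by (simp add: algebra_simps eq_neg_iff_add_eq_0)
  have "a *\<^sub>R x k + b *\<^sub>R x l = (real_of_int \<sigma> / real d) *\<^sub>R (real (lam k) *\<^sub>R x k + real (lam l) *\<^sub>R x l)
        - of_int fa *\<^sub>R x k - of_int fb *\<^sub>R x l"
    unfolding aeq beq by (simp add: algebra_simps)
  also have "\<dots> = of_int (- \<sigma> * int ni) *\<^sub>R x i + of_int (- \<sigma> * int nj) *\<^sub>R x j + of_int (- fa) *\<^sub>R x k + of_int (- fb) *\<^sub>R x l"
    unfolding lkl nij using dpos by (simp add: algebra_simps)
  finally have qeq: "a *\<^sub>R x k + b *\<^sub>R x l = of_int (- \<sigma> * int ni) *\<^sub>R x i + of_int (- \<sigma> * int nj) *\<^sub>R x j + of_int (- fa) *\<^sub>R x k + of_int (- fb) *\<^sub>R x l" .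
  have lat: "lattice_point (a *\<^sub>R x k + b *\<^sub>R x l)"
    unfolding qeq using vert_lattice mem by (intro lattice_add lattice_scale) auto
  define c where "c m = a * (if m = k then 1 else 0) + b * (if m = l then 1 else 0)" for m
  have cs: "(\<Sum>m\<in>{1..4}. c m) = a + b" unfolding decomp c_def using dist by simp
  have cx: "(\<Sum>m\<in>{1..4}. c m *\<^sub>R x m) = a *\<^sub>R x k + b *\<^sub>R x l" unfolding decomp c_def using dist by simp
  have "(\<exists>t. \<forall>m\<in>{1..4}. c m = t * real (lam m)) \<or>
         (\<exists>r\<in>{1..4}. \<exists>t. \<forall>m\<in>{1..4}. c m = (if m = r then 1 else 0) + t * real (lam m))"
    by (rule Q) (use cs cx lat ab bge in \<open>auto simp: c_def a_def b_def\<close>)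
  then show False
  proof
    assume "\<exists>t. \<forall>m\<in>{1..4}. c m = t * real (lam m)"
    then obtain t where t: "\<forall>m\<in>{1..4}. c m = t * real (lam m)" by blast
    have "c i = 0" using dist unfolding c_def by simp
    then have "t = 0" using t mem lam_pos[of i] by simp
    moreover have "c k = a" using dist unfolding c_def by simp
    ultimately show False using t mem ab a_def by simp
  next
    assume "\<exists>r\<in>{1..4}. \<exists>t. \<forall>m\<in>{1..4}. c m = (if m = r then 1 else 0) + t * real (lam m)"
    then obtain r t where t: "\<forall>m\<in>{1..4}. c m = (if m = r then 1 else 0) + t * real (lam m)" by blast
    obtain s where s: "s = i \<or> s = j" "s \<noteq> r" using dist by blast
    have smem: "s \<in> {1..4}" using s mem by auto
    have "c s = 0" using dist s unfolding c_def by auto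
    then have "t = 0" using t smem s lam_pos[OF smem] by simp
    moreover have "c k = a" using dist unfolding c_def by simp
    ultimately show False using t mem ab a_def by (cases "k = r") auto
  qed
qed

lemma part2:
  assumes "i \<in> {1..4}" "j \<in> {1..4}" "i \<noteq> j"
  shows "gcd (lam i) (lam j) = 1"
proof (rule ccontr)
  assume ne: "gcd (lam i) (lam j) \<noteq> 1"
  define g where "g = gcd (lam i) (lam j)"
  have "g \<noteq> 0" using lam_pos[OF assms(1)] by (simp add: g_def)
  moreover have "g \<noteq> 1" using ne by (simp add: g_def)
  ultimately have g2: "g \<ge> 2" by linarith
  have "card ({1..4::nat} - {i, j}) = 2"
    using assms by (subst card_Diff_subset) auto
  then obtain k l where kl: "{1..4::nat} - {i, j} = {k, l}" "k \<noteq> l" by (auto simp: card_2_iff)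
  have set4: "{1..4} = {i, j, k, l}" using kl assms by blast
  have dist: "i \<noteq> k" "i \<noteq> l" "j \<noteq> k" "j \<noteq> l" using kl by blast+
  have "\<not> (g dvd lam k \<and> g dvd lam l)"
  proof
    assume "g dvd lam k \<and> g dvd lam l"
    then have "\<forall>m\<in>{1..4}. g dvd lam m" unfolding set4 by (auto simp: g_def)
    then have "g dvd Gcd (lam ` {1..4})" by (intro Gcd_greatest) auto
    then show False using gcd1 g2 by simp
  qed
  then consider "\<not> g dvd lam k" | "\<not> g dvd lam l" by blast
  then show False
  proof cases
    case 1
    then show False using core2[OF set4 assms(3) dist kl(2) g2] by (simp add: g_def)
  next
    case 2
    have set4': "{1..4} = {i, j, l, k}" using set4 by blast
    then show False using core2[OF set4' assms(3) dist(2,1,4,3) kl(2)[symmetric] g2] 2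
      by (simp add: g_def)
  qed
qed

end

theorem proposition2p5:
  fixes x :: "nat \<Rightarrow> real^3" and lam :: "nat \<Rightarrow> nat" and h :: nat
  assumes "inj_on x {1..4}"
    and "fano_tetrahedron (x ` {1..4})"
    and "Gcd (lam ` {1..4}) = 1"
    and "h = (\<Sum>i\<in>{1..4}. lam i)"
    and "(\<Sum>i\<in>{1..4}. real (lam i) *\<^sub>R x i) = 0"
  shows "(\<forall>\<kappa>::int. 2 \<le> \<kappa> \<and> \<kappa> \<le> int h - 2 \<longrightarrow>
            (\<Sum>i\<in>{1..4}. frac (real_of_int \<kappa> * real (lam i) / real h)) = 2)
       \<and> (\<forall>i\<in>{1..4}. \<forall>j\<in>{1..4}. i \<noteq> j \<longrightarrow> gcd (lam i) (lam j) = 1)"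
proof -
  interpret F: fano_setup x lam h
    using assms by unfold_locales
  show ?thesis
    using F.part1 F.part2 unfolding F.cf_def by blast
qed

end
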